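(* Let $p$ and $q$ be distinct primes, $n=pq$, and let $e$ be a positive integer with $\gcd(e,\varphi(n))=1$. For a positive integer $k$, let $E_{n,e,k}$ be the set of residues $m\in\mathbb{Z}_n$ such that $k$ is the smallest positive integer with $m^{e^{k}}\equiv m \pmod n$ (the fixed points of order $k$ of the map $x\mapsto x^{e}\bmod n$). Then $$|E_{n,e,k}|=\sum_{d\mid k}\mu(k/d)\,\bigl(\gcd(e^{d}-1,p-1)+1\bigr)\bigl(\gcd(e^{d}-1,q-1)+1\bigr),$$ where the sum runs over the positive divisors $d$ of $k$ and $\mu$ is the Möbius function.
   Context: $\mathbb{Z}_n$ denotes a complete residue system modulo $n$, $\varphi$ is Euler's totient function, and $\gcd(a,b)$ is the greatest common divisor (with $\gcd(0,b)=b$). *)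

theory Defs
  imports "HOL-Number_Theory.Number_Theory" "HOL-Computational_Algebra.Squarefree"
begin

definition moebius :: "nat \<Rightarrow> int" where
  "moebius n = (if n = 0 \<or> \<not> squarefree n then 0 else (-1) ^ card (prime_factors n))"

definition fixed_points_order :: "nat \<Rightarrow> nat \<Rightarrow> nat \<Rightarrow> nat set" where
  "fixed_points_order n e k =
     {m \<in> {0..<n}. [m ^ (e ^ k) = m] (mod n) \<and>
        (\<forall>j. 0 < j \<and> j < k \<longrightarrow> \<not> [m ^ (e ^ j) = m] (mod n))}"

end

theory Submission
  imports Defs
begin


lemma sf_prod_pf:
  fixes d :: nat assumes "d > 0" "squarefree d"
  shows "\<Prod>(prime_factors d) = d"
proof -
  have "(\<Prod>p \<in> prime_factors d. p ^ multiplicity p d) = d"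
    using prod_prime_factors[of d] assms by simp
  moreover have "(\<Prod>p \<in> prime_factors d. p ^ multiplicity p d) = \<Prod>(prime_factors d)"
    using assms squarefree_factorial_semiring'[of d] by (intro prod.cong) auto
  ultimately show ?thesis by simp
qed

lemma prod_primes_props:
  fixes m :: nat assumes "m > 0" "S \<subseteq> prime_factors m"
  shows "\<Prod>S dvd m" "squarefree (\<Prod>S)" "prime_factors (\<Prod>S) = S"
proof -
  have fin: "finite S" using assms finite_subset by blast
  have pr: "\<And>p. p \<in> S \<Longrightarrow> prime p" using assms by auto
  have "\<Prod>S dvd \<Prod>(prime_factors m)" using assms by (intro prod_dvd_prod_subset) auto
  also have "\<Prod>(prime_factors m) dvd (\<Prod>p \<in> prime_factors m. p ^ multiplicity p m)"
    by (intro prod_dvd_prod) (auto simp: prime_factors_multiplicity dvd_power)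
  also have "\<dots> = m" using prod_prime_factors[of m] assms by simp
  finally show "\<Prod>S dvd m" .
  show "squarefree (\<Prod>S)"
    using pr by (intro squarefree_prod_coprime) (auto simp: primes_coprime squarefree_prime)
  have "prime_factors (\<Prod>S) = \<Union>((prime_factors \<circ> id) ` S)"
    using fin pr prime_factors_prod[of S id] by (metis id_apply image_iff not_prime_0 prod.cong)
  also have "\<dots> = S" using pr by (auto simp: prime_prime_factors)
  finally show "prime_factors (\<Prod>S) = S" .
qed

lemma moebius_sum:
  fixes m :: nat assumes "m > 0"
  shows "(\<Sum>d \<in> {d. d dvd m}. moebius d) = (if m = 1 then 1 else 0)"
proof -
  have fin: "finite {d. d dvd m}" using assms by (simp add: finite_divisors_nat)
  have "(\<Sum>d \<in> {d. d dvd m}. moebius d) = (\<Sum>d \<in> {d. d dvd m \<and> squarefree d}. moebius d)"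
    using fin by (intro sum.mono_neutral_right) (auto simp: moebius_def)
  also have "\<dots> = (\<Sum>d \<in> {d. d dvd m \<and> squarefree d}. (-1) ^ card (prime_factors d))"
    using assms by (intro sum.cong) (auto simp: moebius_def)
  also have "\<dots> = (\<Sum>S \<in> Pow (prime_factors m). (-1) ^ card S)"
  proof (rule sum.reindex_bij_betw)
    show "bij_betw prime_factors {d. d dvd m \<and> squarefree d} (Pow (prime_factors m))"
    proof (rule bij_betwI[where g = "\<lambda>S. \<Prod>S"])
      show "prime_factors \<in> {d. d dvd m \<and> squarefree d} \<rightarrow> Pow (prime_factors m)"
        using assms by (auto simp: in_prime_factors_iff intro: dvd_trans)
      show "(\<lambda>S. \<Prod>S) \<in> Pow (prime_factors m) \<rightarrow> {d. d dvd m \<and> squarefree d}"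
        using prod_primes_props[OF assms] by auto
      show "\<Prod>(prime_factors x) = x" if "x \<in> {d. d dvd m \<and> squarefree d}" for x
        using that assms sf_prod_pf[of x] by (auto intro: Nat.gr0I)
      show "prime_factors (\<Prod>y) = y" if "y \<in> Pow (prime_factors m)" for y
        using that prod_primes_props[OF assms] by auto
    qed
  qed
  also have "\<dots> = (if m = 1 then 1 else 0)"
  proof (cases "m = 1")
    case True thus ?thesis by simp
  next
    case False
    hence "prime_factors m \<noteq> {}" using assms by (simp add: prime_factorization_empty_iff)
    hence "(\<Sum>S \<in> Pow (prime_factors m). (-1) ^ card S) = (0::int)"
      by (intro sum_alternating_cancels)
         (use card_subsupersets_even_odd[of "prime_factors m" "{}"] in \<open>auto simp: Pow_def\<close>)
    thus ?thesis using False by simp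
  qed
  finally show ?thesis .
qed



lemma dvd_div_swap:
  fixes k c d :: nat assumes "k > 0" "d dvd k"
  shows "c dvd k div d \<longleftrightarrow> c dvd k \<and> d dvd k div c"
proof
  assume h: "c dvd k div d"
  have d0: "d \<noteq> 0" using assms by auto
  have cd: "c * d dvd k" using h dvd_div_iff_mult[OF d0 assms(2)] by simp
  hence ck: "c dvd k" using dvd_mult_left by blast
  have c0: "c \<noteq> 0" using cd assms by auto
  show "c dvd k \<and> d dvd k div c" using ck cd dvd_div_iff_mult[OF c0 ck, of d] by (simp add: mult.commute)
next
  assume h: "c dvd k \<and> d dvd k div c"
  have c0: "c \<noteq> 0" using h assms by auto
  have "d * c dvd k" using h dvd_div_iff_mult[OF c0, of k d] by simp
  thus "c dvd k div d" using dvd_div_iff_mult[of d k c] assms by (auto simp: mult.commute)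
qed

lemma div_div_self:
  fixes k d :: nat assumes "k > 0" "d dvd k" shows "k div (k div d) = d"
  using div_div_eq_right[of d k k] assms by simp

lemma div_dvd_self:
  fixes k d :: nat assumes "d dvd k" shows "k div d dvd k"
  using assms by (metis dvd_div_mult_self dvd_triv_left)

lemma moebius_inversion:
  fixes F g :: "nat \<Rightarrow> int" and k :: nat
  assumes "k > 0" and F: "\<And>d. d > 0 \<Longrightarrow> F d = (\<Sum>c \<in> {c. c dvd d}. g c)"
  shows "(\<Sum>d \<in> {d. d dvd k}. moebius (k div d) * F d) = g k"
proof -
  let ?D = "{d. d dvd k}"
  have fin: "finite ?D" using assms by (simp add: finite_divisors_nat)
  have bij: "bij_betw (\<lambda>d. k div d) ?D ?D"
      by (rule bij_betwI[where g = "\<lambda>d. k div d"])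
         (use assms in \<open>auto simp: div_div_self intro: div_dvd_self\<close>)
  have "(\<Sum>d \<in> ?D. moebius (k div d) * F d) = (\<Sum>d \<in> ?D. moebius (k div (k div d)) * F (k div d))"
    using sum.reindex_bij_betw[OF bij, of "\<lambda>d. moebius (k div d) * F d"] by simp
  also have "\<dots> = (\<Sum>d \<in> ?D. moebius d * F (k div d))"
    using assms by (intro sum.cong refl) (auto simp: div_div_self)
  also have "\<dots> = (\<Sum>d \<in> ?D. \<Sum>c \<in> {c. c \<in> ?D \<and> c dvd k div d}. moebius d * g c)"
  proof (rule sum.cong[OF refl])
    fix d assume d: "d \<in> ?D"
    have kd: "k div d > 0" using d assms by (metis dvd_div_eq_0_iff dvd_div_mult_self gr0I mem_Collect_eq mult_0 not_gr0)
    have "{c. c \<in> ?D \<and> c dvd k div d} = {c. c dvd k div d}"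
      using d div_dvd_self[of d k] by (auto intro: dvd_trans)
    thus "moebius d * F (k div d) = (\<Sum>c \<in> {c. c \<in> ?D \<and> c dvd k div d}. moebius d * g c)"
      using F[OF kd] by (simp add: sum_distrib_left)
  qed
  also have "\<dots> = (\<Sum>c \<in> ?D. \<Sum>d \<in> {d. d \<in> ?D \<and> c dvd k div d}. moebius d * g c)"
    by (rule sum.swap_restrict[OF fin fin])
  also have "\<dots> = (\<Sum>c \<in> ?D. g c * (\<Sum>d \<in> {d. d dvd k div c}. moebius d))"
  proof (rule sum.cong[OF refl])
    fix c assume c: "c \<in> ?D"
    have "{d. d \<in> ?D \<and> c dvd k div d} = {d. d dvd k div c}"
    proof safe
      fix d assume "d dvd k" "c dvd k div d" thus "d dvd k div c" using dvd_div_swap[OF assms(1), of d c] by blast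
    next
      fix d assume "d dvd k div c"
      moreover have "k div c dvd k" using c by (simp add: div_dvd_self)
      ultimately show "d dvd k" by (auto intro: dvd_trans)
      thus "c dvd k div d" using dvd_div_swap[OF assms(1), of d c] \<open>d dvd k div c\<close> c by blast
    qed
    thus "(\<Sum>d \<in> {d. d \<in> ?D \<and> c dvd k div d}. moebius d * g c) = g c * (\<Sum>d \<in> {d. d dvd k div c}. moebius d)"
      by (simp add: sum_distrib_left mult.commute)
  qed
  also have "\<dots> = (\<Sum>c \<in> ?D. if c = k then g c else 0)"
  proof (rule sum.cong[OF refl])
    fix c assume c: "c \<in> ?D"
    have kc: "k div c > 0" using c assms by (metis dvd_div_eq_0_iff dvd_div_mult_self gr0I mem_Collect_eq mult_0 not_gr0)
    have "k div c = 1 \<longleftrightarrow> c = k"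
    proof
      assume "k div c = 1" thus "c = k" using c by (metis dvd_mult_div_cancel mem_Collect_eq mult.right_neutral)
    next
      assume "c = k" thus "k div c = 1" using assms by simp
    qed
    thus "g c * (\<Sum>d \<in> {d. d dvd k div c}. moebius d) = (if c = k then g c else 0)"
      using moebius_sum[OF kc] by auto
  qed
  also have "\<dots> = g k" using fin by (simp add: sum.delta)
  finally show ?thesis .
qed



definition fx :: "nat \<Rightarrow> nat \<Rightarrow> nat \<Rightarrow> nat \<Rightarrow> bool" where
  "fx n e m j \<longleftrightarrow> [m ^ (e ^ j) = m] (mod n)"

lemma fx_0: "fx n e m 0" by (simp add: fx_def)

lemma fx_add: assumes "fx n e m a" "fx n e m b" shows "fx n e m (a + b)"
proof -
  have "m ^ (e ^ (a + b)) = (m ^ (e ^ a)) ^ (e ^ b)" by (simp add: power_add power_mult)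
  moreover have "[(m ^ (e ^ a)) ^ (e ^ b) = m ^ (e ^ b)] (mod n)"
    using assms(1) by (intro cong_pow) (simp add: fx_def)
  ultimately show ?thesis using assms(2) unfolding fx_def by (metis cong_trans)
qed

lemma fx_sub: assumes "fx n e m a" "fx n e m b" "b \<le> a" shows "fx n e m (a - b)"
proof -
  have "m ^ (e ^ a) = (m ^ (e ^ b)) ^ (e ^ (a - b))"
    using assms(3) by (simp add: power_add[symmetric] power_mult[symmetric])
  moreover have "[(m ^ (e ^ b)) ^ (e ^ (a - b)) = m ^ (e ^ (a - b))] (mod n)"
    using assms(2) by (intro cong_pow) (simp add: fx_def)
  ultimately show ?thesis using assms(1) unfolding fx_def by (metis cong_sym cong_trans)
qed

lemma fx_mod: assumes "fx n e m c" "fx n e m d" shows "fx n e m (d mod c)"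
  using assms(2)
proof (induction d rule: less_induct)
  case (less d)
  show ?case
  proof (cases "d < c \<or> c = 0")
    case True thus ?thesis using less.prems by auto
  next
    case False
    hence "fx n e m (d - c)" using fx_sub[OF less.prems assms(1)] by simp
    hence "fx n e m ((d - c) mod c)" using less.IH[of "d - c"] False by simp
    thus ?thesis using False by (simp add: le_mod_geq)
  qed
qed

lemma fx_mult: assumes "fx n e m c" shows "fx n e m (c * t)"
  by (induction t) (auto simp: fx_0 fx_add[OF assms] add.commute)

lemma card_fixed_sum:
  fixes n e d :: nat assumes "d > 0"
  shows "card {m \<in> {0..<n}. [m ^ (e ^ d) = m] (mod n)} =
         (\<Sum>c \<in> {c. c dvd d}. card (fixed_points_order n e c))"
proof -
  have E: "fixed_points_order n e c = {m \<in> {0..<n}. fx n e m c \<and> (\<forall>j. 0 < j \<and> j < c \<longrightarrow> \<not> fx n e m j)}" for c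
    by (simp add: fixed_points_order_def fx_def)
  have eq: "{m \<in> {0..<n}. [m ^ (e ^ d) = m] (mod n)} = (\<Union>c \<in> {c. c dvd d}. fixed_points_order n e c)"
  proof safe
    fix m assume m: "m \<in> {0..<n}" "[m ^ (e ^ d) = m] (mod n)"
    hence fd: "fx n e m d" by (simp add: fx_def)
    define c where "c = (LEAST j. 0 < j \<and> fx n e m j)"
    have c: "0 < c \<and> fx n e m c" unfolding c_def by (rule LeastI[of _ d]) (use fd assms in auto)
    have cmin: "\<not> fx n e m j" if "0 < j" "j < c" for j
      using not_less_Least[of j "\<lambda>j. 0 < j \<and> fx n e m j"] that unfolding c_def by auto
    have "fx n e m (d mod c)" using fx_mod c fd by blast
    moreover have "d mod c < c" using c by simp
    ultimately have "d mod c = 0" using cmin by (auto intro: Nat.gr0I)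
    hence "c dvd d" by (simp add: dvd_eq_mod_eq_0)
    moreover have "m \<in> fixed_points_order n e c" using E m c cmin by auto
    ultimately show "m \<in> (\<Union>c \<in> {c. c dvd d}. fixed_points_order n e c)" by blast
  next
    fix m c assume "c dvd d" "m \<in> fixed_points_order n e c"
    thus "m \<in> {0..<n}" by (simp add: fixed_points_order_def)
  next
    fix m c assume "c dvd d" "m \<in> fixed_points_order n e c"
    then obtain t where "d = c * t" "fx n e m c" using E by (auto elim: dvdE)
    thus "[m ^ (e ^ d) = m] (mod n)" using fx_mult[of n e m c t] by (simp add: fx_def)
  qed
  have "card (\<Union>c \<in> {c. c dvd d}. fixed_points_order n e c) = (\<Sum>c \<in> {c. c dvd d}. card (fixed_points_order n e c))"
  proof (rule card_UN_disjoint)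
    show "finite {c. c dvd d}" using assms by (simp add: finite_divisors_nat)
    show "\<forall>c\<in>{c. c dvd d}. finite (fixed_points_order n e c)" by (simp add: fixed_points_order_def)
    show "\<forall>i\<in>{c. c dvd d}. \<forall>j\<in>{c. c dvd d}. i \<noteq> j \<longrightarrow> fixed_points_order n e i \<inter> fixed_points_order n e j = {}"
    proof (intro ballI impI)
      fix i j assume ij: "i \<in> {c. c dvd d}" "j \<in> {c. c dvd d}" "i \<noteq> j"
      hence pos: "0 < i" "0 < j" using assms by (auto intro: Nat.gr0I)
      show "fixed_points_order n e i \<inter> fixed_points_order n e j = {}"
      proof (cases "i < j")
        case True thus ?thesis using pos unfolding E by auto
      next
        case False hence "j < i" using ij by simp
        thus ?thesis using pos unfolding E by auto
      qed
    qed
  qed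
  with eq show ?thesis by simp
qed



lemma count_units:
  fixes p K :: nat assumes p: "prime p"
  shows "card {x \<in> totatives p. [x ^ K = 1] (mod p)} = gcd K (p - 1)"
proof -
  let ?g = "gcd K (p - 1)"
  have p1: "p > 1" using p prime_gt_1_nat by blast
  have g0: "?g > 0" using p1 by simp
  have eq: "{x \<in> totatives p. [x ^ K = 1] (mod p)} = (\<Union>d \<in> {d. d dvd ?g}. {x \<in> totatives p. ord p x = d})"
  proof safe
    fix x assume x: "x \<in> totatives p" "[x ^ K = 1] (mod p)"
    have "ord p x dvd K" using x(2) ord_divides'[of x K p] by simp
    moreover have "ord p x dvd p - 1"
      using x(1) order_divides_totient[of p x] totient_prime[OF p]
      by (simp add: in_totatives_iff coprime_commute)
    ultimately show "x \<in> (\<Union>d \<in> {d. d dvd ?g}. {x \<in> totatives p. ord p x = d})" using x by auto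
  next
    fix x d assume "ord p x dvd ?g"
    hence "ord p x dvd K" by (rule dvd_trans) simp
    thus "[x ^ K = 1] (mod p)" using ord_divides'[of x K p] by simp
  qed
  have "card (\<Union>d \<in> {d. d dvd ?g}. {x \<in> totatives p. ord p x = d}) =
        (\<Sum>d \<in> {d. d dvd ?g}. card {x \<in> totatives p. ord p x = d})"
    using g0 by (intro card_UN_disjoint) (auto simp: finite_divisors_nat)
  also have "\<dots> = (\<Sum>d \<in> {d. d dvd ?g}. totient d)"
  proof (rule sum.cong[OF refl])
    fix d assume "d \<in> {d. d dvd ?g}"
    hence "d dvd p - 1" using dvd_trans by auto
    thus "card {x \<in> totatives p. ord p x = d} = totient d"
      using prime_card_elements_with_ord_eq_totient[OF p1 p, of d] by simp
  qed
  also have "\<dots> = ?g" by (rule totient_divisor_sum)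
  finally show ?thesis using eq by simp
qed

lemma count_p:
  fixes p N :: nat assumes p: "prime p" and N: "N > 0"
  shows "card {a \<in> {0..<p}. [a ^ N = a] (mod p)} = gcd (N - 1) (p - 1) + 1"
proof -
  have eq: "{a \<in> {0..<p}. [a ^ N = a] (mod p)} = insert 0 {x \<in> totatives p. [x ^ (N - 1) = 1] (mod p)}"
  proof (intro equalityI subsetI)
    fix a assume "a \<in> {a \<in> {0..<p}. [a ^ N = a] (mod p)}"
    hence a: "a \<in> {0..<p}" "[a ^ N = a] (mod p)" by auto
    show "a \<in> insert 0 {x \<in> totatives p. [x ^ (N - 1) = 1] (mod p)}"
    proof (cases "a = 0")
      case False
    hence at: "a \<in> totatives p" using a totatives_prime[OF p] by auto
    hence at: "a \<in> totatives p" using totatives_prime[OF p] by auto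
    hence cop: "coprime a p" by (simp add: in_totatives_iff)
    have "a ^ N = a * a ^ (N - 1)" using N by (cases N) auto
    hence "[a * a ^ (N - 1) = a * 1] (mod p)" using a(2) by simp
    hence "[a ^ (N - 1) = 1] (mod p)" using cong_mult_lcancel_nat[OF cop] by blast
    thus ?thesis using at by auto
    qed simp
  next
    fix a assume "a \<in> insert 0 {x \<in> totatives p. [x ^ (N - 1) = 1] (mod p)}"
    moreover have "0 < p" using p prime_gt_0_nat by blast
    moreover {
    assume a: "a \<in> totatives p" "[a ^ (N - 1) = 1] (mod p)"
    have "a \<in> {0..<p}" using a totatives_prime[OF p] by auto
    have "a ^ N = a * a ^ (N - 1)" using N by (cases N) auto
    moreover have "[a * a ^ (N - 1) = a * 1] (mod p)" using a(2) by (intro cong_mult) auto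
    ultimately have "[a ^ N = a] (mod p)" by simp
    hence "a \<in> {a \<in> {0..<p}. [a ^ N = a] (mod p)}" using \<open>a \<in> {0..<p}\<close> by simp
    }
    ultimately show "a \<in> {a \<in> {0..<p}. [a ^ N = a] (mod p)}" using N by (auto simp: zero_power)
  qed
  have "0 \<notin> totatives p" by (simp add: in_totatives_iff)
  hence "card (insert 0 {x \<in> totatives p. [x ^ (N - 1) = 1] (mod p)}) = card {x \<in> totatives p. [x ^ (N - 1) = 1] (mod p)} + 1"
    by (subst card_insert_disjoint) auto
  with eq count_units[OF p, of "N - 1"] show ?thesis by simp
qed

lemma cong_pq_iff:
  fixes p q x y :: nat assumes "coprime p q"
  shows "[x = y] (mod p * q) \<longleftrightarrow> [x = y] (mod p) \<and> [x = y] (mod q)"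
  using assms coprime_cong_mult_nat cong_modulus_mult_nat[of x y p q] cong_modulus_mult_nat[of x y q p]
  by (auto simp: mult.commute)

lemma count_crt:
  fixes p q N :: nat assumes p: "prime p" and q: "prime q" and pq: "p \<noteq> q"
  shows "card {m \<in> {0..<p * q}. [m ^ N = m] (mod p * q)} =
         card {a \<in> {0..<p}. [a ^ N = a] (mod p)} * card {a \<in> {0..<q}. [a ^ N = a] (mod q)}"
proof -
  have cop: "coprime p q" using p q pq by (simp add: primes_coprime)
  have p0: "p > 0" and q0: "q > 0" using p q prime_gt_0_nat by auto
  let ?h = "\<lambda>m. (m mod p, m mod q)"
  have inj: "inj_on ?h {0..<p * q}"
  proof (rule inj_onI)
    fix x y assume xy: "x \<in> {0..<p * q}" "y \<in> {0..<p * q}" "?h x = ?h y"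
    hence "[x = y] (mod p) \<and> [x = y] (mod q)" by (simp add: cong_def)
    hence "[x = y] (mod p * q)" using cong_pq_iff[OF cop] by blast
    thus "x = y" using xy by (simp add: cong_def)
  qed
  have img: "?h ` {0..<p * q} = {0..<p} \<times> {0..<q}"
  proof (rule card_subset_eq)
    show "finite ({0..<p} \<times> {0..<q})" by simp
    show "?h ` {0..<p * q} \<subseteq> {0..<p} \<times> {0..<q}" using p0 q0 by auto
    show "card (?h ` {0..<p * q}) = card ({0..<p} \<times> {0..<q})"
      using inj by (simp add: card_image card_cartesian_product)
  qed
  let ?S = "{m \<in> {0..<p * q}. [m ^ N = m] (mod p * q)}"
  let ?Ap = "{a \<in> {0..<p}. [a ^ N = a] (mod p)}"
  let ?Aq = "{a \<in> {0..<q}. [a ^ N = a] (mod q)}"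
  have modc: "[(m mod r) ^ N = m mod r] (mod r) \<longleftrightarrow> [m ^ N = m] (mod r)" for m r :: nat
    by (simp add: cong_def power_mod)
  have "?h ` ?S = ?Ap \<times> ?Aq"
  proof (intro equalityI subsetI)
    fix x assume "x \<in> ?h ` ?S"
    then obtain m where m: "[m ^ N = m] (mod p * q)" "x = ?h m" by (elim imageE) blast
    have "[m ^ N = m] (mod p)" "[m ^ N = m] (mod q)" using m(1) cong_pq_iff[OF cop] by blast+
    hence "[(m mod p) ^ N = m mod p] (mod p)" "[(m mod q) ^ N = m mod q] (mod q)" using modc by blast+
    moreover have "m mod p < p" "m mod q < q" using p0 q0 by auto
    ultimately show "x \<in> ?Ap \<times> ?Aq" using m(2) by simp
  next
    fix x assume "x \<in> ?Ap \<times> ?Aq"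
    then obtain a b where ab: "a \<in> ?Ap" "b \<in> ?Aq" "x = (a, b)" by auto
    have "(a, b) \<in> ?h ` {0..<p * q}" unfolding img using ab by simp
    then obtain m where m: "m \<in> {0..<p*q}" "?h m = (a, b)" by (elim imageE) auto
    hence "a = m mod p" "b = m mod q" by auto
    have "[(m mod p) ^ N = m mod p] (mod p)" "[(m mod q) ^ N = m mod q] (mod q)"
      using ab \<open>a = m mod p\<close> \<open>b = m mod q\<close> by auto
    hence "[m ^ N = m] (mod p)" "[m ^ N = m] (mod q)" using modc by blast+
    hence "[m ^ N = m] (mod p * q)" using cong_pq_iff[OF cop] by blast
    hence "m \<in> ?S" using m(1) by simp
    moreover have "x = ?h m" using m(2) ab(3) by simp
    ultimately show "x \<in> ?h ` ?S" by blast
  qed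
  moreover have "card (?h ` ?S) = card ?S"
    by (rule card_image[OF inj_on_subset[OF inj]]) auto
  ultimately have "card ?S = card (?Ap \<times> ?Aq)" by simp
  thus ?thesis by (simp add: card_cartesian_product)
qed


theorem theorem2:
  fixes p q e k :: nat
  assumes "prime p" and "prime q" and "p \<noteq> q"
    and "e > 0" and "coprime e (totient (p * q))"
    and "k > 0"
  shows "int (card (fixed_points_order (p * q) e k)) =
    (\<Sum>d \<in> {d. d dvd k}. moebius (k div d) *
        (int (gcd (e ^ d - 1) (p - 1)) + 1) * (int (gcd (e ^ d - 1) (q - 1)) + 1))"
proof -
  define F where "F d = int (card {m \<in> {0..<p * q}. [m ^ (e ^ d) = m] (mod p * q)})" for d
  define g where "g c = int (card (fixed_points_order (p * q) e c))" for c
  have Fg: "F d = (\<Sum>c \<in> {c. c dvd d}. g c)" if "d > 0" for d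
    unfolding F_def g_def using card_fixed_sum[OF that, of "p * q" e] by (simp add: of_nat_sum)
  have Fv: "F d = (int (gcd (e ^ d - 1) (p - 1)) + 1) * (int (gcd (e ^ d - 1) (q - 1)) + 1)" for d
  proof -
    have N: "e ^ d > 0" using assms(4) by simp
    show ?thesis unfolding F_def
      using count_crt[OF assms(1,2,3), of "e ^ d"] count_p[OF assms(1) N] count_p[OF assms(2) N]
      by (simp add: algebra_simps)
  qed
  have "(\<Sum>d \<in> {d. d dvd k}. moebius (k div d) * F d) = g k"
    by (rule moebius_inversion[OF assms(6) Fg])
  moreover have "(\<Sum>d \<in> {d. d dvd k}. moebius (k div d) * F d) =
    (\<Sum>d \<in> {d. d dvd k}. moebius (k div d) *
        (int (gcd (e ^ d - 1) (p - 1)) + 1) * (int (gcd (e ^ d - 1) (q - 1)) + 1))"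
    by (intro sum.cong refl) (simp add: Fv mult.assoc)
  ultimately show ?thesis by (simp add: g_def)
qed

end
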